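(* Let $S\subset\mathbf{P}^4_{\mathbb{Q}}$ be a smooth quadric surface such that the double covering $\pi:O\to\mathbf{P}^4_{\mathbb{Q}}$ splits over $S$, $S$ is tangent to the five coordinate hyperplanes $H_0,\ldots,H_4$, and for each $i$ the point of tangency of $S$ with $H_i$ is contained in one of the three lines on $H_i\cap R$. Write $P^{(0)}=(0:x_1^{(0)}:x_2^{(0)}:x_3^{(0)}:x_4^{(0)})$ for the point of tangency of $S$ with $H_0$. Then $x_1^{(0)},x_2^{(0)},x_3^{(0)},x_4^{(0)}\neq0$.
   Context: Let $\Delta'(x_0,\ldots,x_4):=\prod_{i_1,\ldots,i_4\in\{0,1\}}\big(\sqrt{x_0}+(-1)^{i_1}\sqrt{x_1}+(-1)^{i_2}\sqrt{x_2}+(-1)^{i_3}\sqrt{x_3}+(-1)^{i_4}\sqrt{x_4}\big)\in\mathbb{Q}[x_0,\ldots,x_4]$ (degree $8$). $O$ is the double covering $\pi:O\to\mathbf{P}^4_{\mathbb{Q}}$ given by $w^2=(-3)\Delta'(x_0,\ldots,x_4)$; it splits over $S$ if $(-3)\Delta'$ restricted to $S$ is a square, i.e. $\pi^{-1}(S)\to S$ is a trivial double covering. $R$ is the locus $\Delta'=0$ and $H_i$ the hyperplane $x_i=0$. The three lines on $H_0\cap R$ are $\{(0:r:r:s:s)\}$, $\{(0:r:s:r:s)\}$, $\{(0:r:s:s:r)\}$, and analogously for the other $H_i$. $S$ is tangent to $H_i$ at $P$ if $T_PS\subset H_i$. *)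

theory Defs
  imports Complex_Main
begin

text \<open>Points of P^4 are represented by coordinate vectors x :: nat => complex,
  only the coordinates 0..4 being relevant; a vector represents a point iff it is
  nonzero in some coordinate j < 5.  All conditions below are homogeneous.\<close>

definition proj_pt :: "(nat \<Rightarrow> complex) \<Rightarrow> bool" where
  "proj_pt x \<longleftrightarrow> (\<exists>j<5. x j \<noteq> 0)"

text \<open>Evaluation of Delta'(x_0,...,x_4).  The product is invariant under the choice of
  square roots, so this is the evaluation of the polynomial Delta' in Q[x_0..x_4].\<close>

definition Delta' :: "(nat \<Rightarrow> complex) \<Rightarrow> complex" where
  "Delta' x = (\<Prod>i1\<in>{0,1::nat}. \<Prod>i2\<in>{0,1::nat}. \<Prod>i3\<in>{0,1::nat}. \<Prod>i4\<in>{0,1::nat}.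
       csqrt (x 0) + (-1) ^ i1 * csqrt (x 1) + (-1) ^ i2 * csqrt (x 2)
       + (-1) ^ i3 * csqrt (x 3) + (-1) ^ i4 * csqrt (x 4))"

text \<open>A quadric surface in P^4 over Q: the intersection of the hyperplane l.x = 0
  and the quadric x^T A x = 0, with rational l and symmetric rational A.\<close>

definition lin_form :: "(nat \<Rightarrow> rat) \<Rightarrow> (nat \<Rightarrow> complex) \<Rightarrow> complex" where
  "lin_form l x = (\<Sum>j<5. of_rat (l j) * x j)"

definition bil_form :: "(nat \<Rightarrow> nat \<Rightarrow> rat) \<Rightarrow> (nat \<Rightarrow> complex) \<Rightarrow> (nat \<Rightarrow> complex) \<Rightarrow> complex" where
  "bil_form A x y = (\<Sum>j<5. \<Sum>k<5. of_rat (A j k) * x j * y k)"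

definition on_surface :: "(nat \<Rightarrow> rat) \<Rightarrow> (nat \<Rightarrow> nat \<Rightarrow> rat) \<Rightarrow> (nat \<Rightarrow> complex) \<Rightarrow> bool" where
  "on_surface l A x \<longleftrightarrow> proj_pt x \<and> lin_form l x = 0 \<and> bil_form A x x = 0"

text \<open>Smooth quadric surface: l \<noteq> 0, A symmetric, and the quadratic form is
  nondegenerate on the 4-dimensional space l.x = 0 (equivalently, the Jacobian of
  (l, q) has rank 2 at every point of S).\<close>

definition smooth_quadric_surface :: "(nat \<Rightarrow> rat) \<Rightarrow> (nat \<Rightarrow> nat \<Rightarrow> rat) \<Rightarrow> bool" where
  "smooth_quadric_surface l A \<longleftrightarrow>
     (\<exists>j<5. l j \<noteq> 0) \<and> (\<forall>j<5. \<forall>k<5. A j k = A k j) \<and>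
     (\<forall>v. lin_form l v = 0 \<and> (\<forall>w. lin_form l w = 0 \<longrightarrow> bil_form A v w = 0)
          \<longrightarrow> (\<forall>j<5. v j = 0))"

definition tangent_space :: "(nat \<Rightarrow> rat) \<Rightarrow> (nat \<Rightarrow> nat \<Rightarrow> rat) \<Rightarrow> (nat \<Rightarrow> complex) \<Rightarrow> (nat \<Rightarrow> complex) set" where
  "tangent_space l A P = {v. lin_form l v = 0 \<and> bil_form A P v = 0}"

definition tangent_at :: "(nat \<Rightarrow> rat) \<Rightarrow> (nat \<Rightarrow> nat \<Rightarrow> rat) \<Rightarrow> nat \<Rightarrow> (nat \<Rightarrow> complex) \<Rightarrow> bool" where
  "tangent_at l A i P \<longleftrightarrow> on_surface l A P \<and> (\<forall>v\<in>tangent_space l A P. v i = 0)"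

text \<open>P lies on one of the three lines on H_i \<inter> R: x_i = 0 and the other four
  coordinates split into two pairs of equal coordinates.\<close>

definition on_R_line :: "nat \<Rightarrow> (nat \<Rightarrow> complex) \<Rightarrow> bool" where
  "on_R_line i P \<longleftrightarrow> P i = 0 \<and>
     (\<exists>a b c d. {a,b,c,d} = {0..4} - {i} \<and> card {a,b,c,d} = 4 \<and> P a = P b \<and> P c = P d)"

definition quartic_form :: "(nat \<Rightarrow> nat \<Rightarrow> nat \<Rightarrow> nat \<Rightarrow> rat) \<Rightarrow> (nat \<Rightarrow> complex) \<Rightarrow> complex" where
  "quartic_form T x = (\<Sum>j<5. \<Sum>k<5. \<Sum>m<5. \<Sum>n<5. of_rat (T j k m n) * x j * x k * x m * x n)"

text \<open>The double cover w^2 = (-3) Delta' splits over S: (-3) Delta' restricted to S is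
  the square of a quartic form over Q.\<close>

definition splits_over :: "(nat \<Rightarrow> rat) \<Rightarrow> (nat \<Rightarrow> nat \<Rightarrow> rat) \<Rightarrow> bool" where
  "splits_over l A \<longleftrightarrow> (\<exists>T. \<forall>x. on_surface l A x \<longrightarrow> -3 * Delta' x = (quartic_form T x)\<^sup>2)"

end

theory Submission
  imports Defs
begin


lemma lin_lin: "lin_form l (\<lambda>i. u * x i + v * y i) = u * lin_form l x + v * lin_form l y"
  unfolding lin_form_def by (simp add: sum.distrib sum_distrib_left algebra_simps)

lemma bil_lin2: "bil_form A P (\<lambda>i. u * x i + v * y i) = u * bil_form A P x + v * bil_form A P y"
  unfolding bil_form_def by (simp add: sum.distrib sum_distrib_left algebra_simps)

lemma bil_lin1: "bil_form A (\<lambda>i. u * x i + v * y i) P = u * bil_form A x P + v * bil_form A y P"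
  unfolding bil_form_def by (simp add: sum.distrib sum_distrib_left algebra_simps)

lemma bil_scale1: "bil_form A (\<lambda>i. u * x i) P = u * bil_form A x P"
  unfolding bil_form_def by (simp add: sum_distrib_left algebra_simps)

lemma proj_lin: "(\<lambda>v. v (i::nat)) (\<lambda>i. u * x i + v * y i) = u * x i + v * (y i::complex)" by simp

lemma bil_cong1: "(\<forall>i<5. x i = x' i) \<Longrightarrow> bil_form A x P = bil_form A x' P"
  unfolding bil_form_def by (intro sum.cong refl) auto

lemma bil_sym: assumes "\<forall>j<5. \<forall>k<5. A j k = A k j" shows "bil_form A x y = bil_form A y x"
proof -
  have "bil_form A x y = (\<Sum>k<5. \<Sum>j<5. of_rat (A j k) * x j * y k)"
    unfolding bil_form_def by (rule sum.swap)
  also have "\<dots> = bil_form A y x" unfolding bil_form_def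
    by (intro sum.cong refl) (use assms in \<open>auto simp: algebra_simps\<close>)
  finally show ?thesis .
qed

lemma span3:
  fixes f g h :: "(nat \<Rightarrow> complex) \<Rightarrow> complex"
  assumes lf: "\<And>x y u v. f (\<lambda>i. u * x i + v * y i) = u * f x + v * f y"
    and lg: "\<And>x y u v. g (\<lambda>i. u * x i + v * y i) = u * g x + v * g y"
    and lh: "\<And>x y u v. h (\<lambda>i. u * x i + v * y i) = u * h x + v * h y"
    and w: "f w \<noteq> 0" and ker: "\<And>v. f v = 0 \<Longrightarrow> g v = 0 \<Longrightarrow> h v = 0"
  shows "\<exists>\<alpha> \<beta>. \<forall>v. h v = \<alpha> * f v + \<beta> * g v"
proof (cases "\<exists>z. f z = 0 \<and> g z \<noteq> 0")
  case True
  then obtain z where z: "f z = 0" "g z \<noteq> 0" by blast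
  show ?thesis
  proof (intro exI allI)
    fix v
    define v' where "v' = (\<lambda>i. 1 * v i + (-(f v / f w)) * w i)"
    have fv': "f v' = 0" unfolding v'_def lf using w by simp
    define v'' where "v'' = (\<lambda>i. 1 * v' i + (-(g v' / g z)) * z i)"
    have "f v'' = 0" unfolding v''_def lf using fv' z by simp
    moreover have "g v'' = 0" unfolding v''_def lg using z by simp
    ultimately have "h v'' = 0" by (rule ker)
    hence 1: "h v' = (g v' / g z) * h z" unfolding v''_def lh using z by (simp add: field_simps)
    have 2: "h v' = h v - (f v / f w) * h w" unfolding v'_def lh by simp
    have 3: "g v' = g v - (f v / f w) * g w" unfolding v'_def lg by simp
    show "h v = (h w / f w - g w * h z / (f w * g z)) * f v + (h z / g z) * g v"
    proof -
      have "h v = h v' + (f v / f w) * h w" using 2 by simp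
      also have "\<dots> = (g v - (f v / f w) * g w) / g z * h z + (f v / f w) * h w" using 1 3 by simp
      finally have "h v = (g v - (f v / f w) * g w) / g z * h z + (f v / f w) * h w" .
      thus ?thesis using w z by (simp add: field_simps)
    qed
  qed
next
  case False
  show ?thesis
  proof (intro exI allI)
    fix v
    define v' where "v' = (\<lambda>i. 1 * v i + (-(f v / f w)) * w i)"
    have fv': "f v' = 0" unfolding v'_def lf using w by simp
    hence "g v' = 0" using False by blast
    hence "h v' = 0" using ker fv' by blast
    hence "h v = (f v / f w) * h w" unfolding v'_def lh by (simp add: field_simps)
    thus "h v = (h w / f w) * f v + 0 * g v" using w by simp
  qed
qed

lemma three_false:
  fixes a1 a2 a3 b1 b2 b3 F1 F2 F3 G1 G2 G3 :: complex
  assumes "a1*F1+b1*G1 = 1" "a1*F2+b1*G2 = 0" "a1*F3+b1*G3 = 0"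
    "a2*F1+b2*G1 = 0" "a2*F2+b2*G2 = 1" "a2*F3+b2*G3 = 0"
    "a3*F1+b3*G1 = 0" "a3*F2+b3*G2 = 0" "a3*F3+b3*G3 = 1"
  shows False
proof -
  have "(a1*F1+b1*G1)*((a2*F2+b2*G2)*(a3*F3+b3*G3) - (a2*F3+b2*G3)*(a3*F2+b3*G2))
      - (a1*F2+b1*G2)*((a2*F1+b2*G1)*(a3*F3+b3*G3) - (a2*F3+b2*G3)*(a3*F1+b3*G1))
      + (a1*F3+b1*G3)*((a2*F1+b2*G1)*(a3*F2+b3*G2) - (a2*F2+b2*G2)*(a3*F1+b3*G1)) = 0"
    by algebra
  thus False using assms by simp
qed



definition R3 :: "(nat \<Rightarrow> complex) \<Rightarrow> nat \<Rightarrow> nat \<Rightarrow> nat \<Rightarrow> nat \<Rightarrow> bool" where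
  "R3 x a b c d \<longleftrightarrow> (x a = x b \<and> x c = x d) \<or> (x a = x c \<and> x b = x d) \<or> (x a = x d \<and> x b = x c)"

lemma card4_distinct: "card {a,b,c,d::nat} = 4 \<Longrightarrow> distinct [a,b,c,d]"
  by (auto simp: card_insert_if split: if_splits)

lemma R3_sw1: "R3 x a b c d = R3 x b a c d" unfolding R3_def by auto
lemma R3_sw2: "R3 x a b c d = R3 x a c b d" unfolding R3_def by auto
lemma R3_sw3: "R3 x a b c d = R3 x a b d c" unfolding R3_def by auto
lemma R3_perm:
  assumes "R3 x a b c d" "distinct [a,b,c,d]" "distinct [a',b',c',d']" "{a',b',c',d'} = {a,b,c,d}"
  shows "R3 x a' b' c' d'"
proof -
  have "a' = a \<or> a' = b \<or> a' = c \<or> a' = d" "b' = a \<or> b' = b \<or> b' = c \<or> b' = d"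
     "c' = a \<or> c' = b \<or> c' = c \<or> c' = d" "d' = a \<or> d' = b \<or> d' = c \<or> d' = d"
    using assms(4) by blast+
  thus ?thesis using assms(1-3)
    by (elim disjE; simp only: distinct.simps list.set insert_iff empty_iff; 
        metis R3_sw1 R3_sw2 R3_sw3)
qed

lemma on_R_line_R3:
  assumes "on_R_line k P" "distinct [a',b',c',d']" "{a',b',c',d'} = {0..4} - {k}"
  shows "R3 P a' b' c' d'"
proof -
  obtain a b c d where h: "{a,b,c,d} = {0..4} - {k}" "card {a,b,c,d} = 4" "P a = P b" "P c = P d"
    using assms(1) unfolding on_R_line_def by blast
  have "R3 P a b c d" using h unfolding R3_def by simp
  moreover have "distinct [a,b,c,d]" using h(2) by (rule card4_distinct)
  moreover have "{a',b',c',d'} = {a,b,c,d}" using h(1) assms(3) by simp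
  ultimately show ?thesis using R3_perm assms(2) by blast
qed

lemma R3_scale: "R3 x a b c d \<Longrightarrow> R3 (\<lambda>i. s * x i) a b c d"
  unfolding R3_def by auto



lemma h2: "(x::complex) * r + y * r = 0 \<Longrightarrow> r \<noteq> 0 \<Longrightarrow> x = - y"
proof -
  assume "x * r + y * r = 0" "r \<noteq> 0"
  hence "(x + y) * r = 0" by (simp add: distrib_right)
  hence "x + y = 0" using \<open>r \<noteq> 0\<close> by simp
  thus ?thesis by (simp add: eq_neg_iff_add_eq_0)
qed

lemma h3: "(x::complex) * (2 * r + 2 * g) = 0 \<Longrightarrow> x \<noteq> 0 \<Longrightarrow> g = - r"
proof -
  assume "x * (2 * r + 2 * g) = 0" "x \<noteq> 0"
  hence "2 * r + 2 * g = 0" by simp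
  hence "r + g = 0" by (metis distrib_left mult_eq_0_iff zero_neq_numeral)
  thus ?thesis by (simp add: eq_neg_iff_add_eq_0 add.commute)
qed

lemma core:
  fixes B :: "nat \<Rightarrow> nat \<Rightarrow> complex" and L :: "nat \<Rightarrow> complex" and a b c d :: nat
    and Q :: "(nat \<Rightarrow> complex) \<Rightarrow> bool"
  assumes dist: "distinct [0,a,b,c,d]" and lt: "a<5" "b<5" "c<5" "d<5"
    and cover: "\<forall>x<5. x = 0 \<or> x = a \<or> x = b \<or> x = c \<or> x = d"
    and sym: "\<forall>i<5. \<forall>j<5. B i j = B j i"
    and diag: "\<forall>i<5. B i i = 0"
    and R0: "R3 (\<lambda>i. B i 0) a b c d" and Ra: "R3 (\<lambda>i. B i a) 0 b c d"
    and Rb: "R3 (\<lambda>i. B i b) 0 a c d" and Rc: "R3 (\<lambda>i. B i c) 0 a b d"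
    and Rd: "R3 (\<lambda>i. B i d) 0 a b c"
    and nz: "\<forall>k<5. \<exists>i<5. B i k \<noteq> 0"
    and Bl: "\<And>k. k < 5 \<Longrightarrow> L 0 * B 0 k + L a * B a k + L b * B b k + L c * B c k + L d * B d k = 0"
    and Lnz: "L 0 \<noteq> 0 \<or> L a \<noteq> 0 \<or> L b \<noteq> 0 \<or> L c \<noteq> 0 \<or> L d \<noteq> 0"
    and W: "B 0 a = B 0 b" "B 0 c = 0" "B 0 d = 0"
    and coinc: "\<And>j k t \<mu> \<nu>. j<5 \<Longrightarrow> k<5 \<Longrightarrow> t<5 \<Longrightarrow> j\<noteq>k \<Longrightarrow> j\<noteq>t \<Longrightarrow> k\<noteq>t \<Longrightarrow>
        (\<forall>i<5. B i j = \<mu> * B i k) \<Longrightarrow> (\<forall>i<5. B i t = \<nu> * B i k) \<Longrightarrow> False"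
    and split: "\<And>j k u v. j<5 \<Longrightarrow> k<5 \<Longrightarrow> j \<noteq> k \<Longrightarrow> B j k = 0 \<Longrightarrow> Q (\<lambda>i. u * B i j + v * B i k)"
    and Qbad1: "\<And>y. y 0 = 0 \<Longrightarrow> y a = 1 \<Longrightarrow> y b = 0 \<Longrightarrow> y c = 0 \<Longrightarrow> y d = -1 \<Longrightarrow> \<not> Q y"
    and Qbad2: "\<And>y. y 0 = 0 \<Longrightarrow> y a = 0 \<Longrightarrow> y b = 1 \<Longrightarrow> y c = 0 \<Longrightarrow> y d = -1 \<Longrightarrow> \<not> Q y"
  shows False
proof -
  have l0: "(0::nat) < 5" by simp
  have s: "B a 0 = B 0 a" "B b 0 = B 0 b" "B c 0 = B 0 c" "B d 0 = B 0 d"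
    "B b a = B a b" "B c a = B a c" "B d a = B a d" "B c b = B b c" "B d b = B b d" "B d c = B c d"
    using lt l0 by (simp_all add: sym[rule_format])
  have z: "B 0 0 = 0" "B a a = 0" "B b b = 0" "B c c = 0" "B d d = 0" using diag lt l0 by simp_all
  have nzk: "B 0 k \<noteq> 0 \<or> B a k \<noteq> 0 \<or> B b k \<noteq> 0 \<or> B c k \<noteq> 0 \<or> B d k \<noteq> 0" if kk: "k<5" for k
  proof -
    obtain i where "i<5" "B i k \<noteq> 0" using nz kk by blast
    thus ?thesis using cover by auto
  qed
  have allI5: "\<forall>i<5. P i" if "P 0" "P a" "P b" "P c" "P d" for P :: "nat \<Rightarrow> bool"
    using cover that by auto
  define r where "r = B 0 a"
  have W0: "B 0 a = r" "B 0 b = r" "B 0 c = 0" "B 0 d = 0" using W r_def by simp_all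
  have rnz: "r \<noteq> 0" using nzk[OF l0] z W0 s by auto
  have Bl0: "L a * r + L b * r = 0" using Bl[OF l0] z W0 s by simp
  have Bla: "L 0 * r + L b * B a b + L c * B a c + L d * B a d = 0" using Bl[OF lt(1)] z W0 s by simp
  have Blb: "L 0 * r + L a * B a b + L c * B b c + L d * B b d = 0" using Bl[OF lt(2)] z W0 s by simp
  have Blc: "L a * B a c + L b * B b c + L d * B c d = 0" using Bl[OF lt(3)] z W0 s by simp
  have Bld: "L a * B a d + L b * B b d + L c * B c d = 0" using Bl[OF lt(4)] z W0 s by simp
  have Rc': "(0 = B a c \<and> B b c = B c d) \<or> (0 = B b c \<and> B a c = B c d) \<or> (0 = B c d \<and> B a c = B b c)"
    using Rc W0 s unfolding R3_def by simp
  have Rd': "(0 = B a d \<and> B b d = B c d) \<or> (0 = B b d \<and> B a d = B c d) \<or> (0 = B c d \<and> B a d = B b d)"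
    using Rd W0 s unfolding R3_def by simp
  have Ra': "(r = B a b \<and> B a c = B a d) \<or> (r = B a c \<and> B a b = B a d) \<or> (r = B a d \<and> B a b = B a c)"
    using Ra W0 s unfolding R3_def by simp
  have Rb': "(r = B a b \<and> B b c = B b d) \<or> (r = B b c \<and> B a b = B b d) \<or> (r = B b d \<and> B a b = B b c)"
    using Rb W0 s unfolding R3_def by simp
  have nzc: "B a c \<noteq> 0 \<or> B b c \<noteq> 0 \<or> B c d \<noteq> 0" using nzk[OF lt(3)] z W0 s by auto
  have nzd: "B a d \<noteq> 0 \<or> B b d \<noteq> 0 \<or> B c d \<noteq> 0" using nzk[OF lt(4)] z W0 s by auto
  show False
  proof (cases "B c d = 0")
    case True
    have e1: "B a c = B b c" using Rc' True nzc by auto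
    have e2: "B a d = B b d" using Rd' True nzd by auto
    show False
    proof (rule coinc[of c 0 d "B a c / r" "B a d / r"])
      show "\<forall>i<5. B i c = B a c / r * B i 0"
        by (rule allI5) (use rnz z W0 s e1 True in auto)
      show "\<forall>i<5. B i d = B a d / r * B i 0"
        by (rule allI5) (use rnz z W0 s e2 True in auto)
    qed (use dist lt in auto)
  next
    case False
    define g where "g = B c d"
    have gnz: "g \<noteq> 0" using False g_def by simp
    have C: "(B a c = 0 \<and> B b c = g) \<or> (B b c = 0 \<and> B a c = g)" using Rc' False g_def by auto
    have D: "(B a d = 0 \<and> B b d = g) \<or> (B b d = 0 \<and> B a d = g)" using Rd' False g_def by auto
    show False
    proof (cases "B a c = 0")
      case c1: True
      hence bc: "B b c = g" using C by auto
      show False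
      proof (cases "B a d = 0")
        case d1: True
        hence bd: "B b d = g" using D by auto
        have ab: "B a b = r" using Ra' c1 d1 rnz by auto
        have e0: "L a = - L b" using h2[of "L a" r "L b"] Bl0 rnz by (simp add: ac_simps)
        have ea: "L 0 = - L b" using h2[of "L 0" r "L b"] Bla ab c1 d1 rnz by (simp add: ac_simps)
        have ec: "L d = - L b" using h2[of "L d" g "L b"] Blc c1 bc g_def gnz by (simp add: ac_simps)
        have ed: "L c = - L b" using h2[of "L c" g "L b"] Bld d1 bd g_def gnz by (simp add: ac_simps)
        have X: "L 0 * r + L a * r + L c * g + L d * g = 0" using Blb ab bc bd by simp
        have "L b * (2 * r + 2 * g) = - (L 0 * r + L a * r + L c * g + L d * g)"
          by (simp add: e0 ea ec ed algebra_simps)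
        hence "L b * (2 * r + 2 * g) = 0" using X by simp
        moreover have "L b \<noteq> 0" using Lnz e0 ea ec ed by auto
        ultimately have gr: "g = - r" by (rule h3)
        have "Q (\<lambda>i. (1/r) * B i 0 + (1/r) * B i c)"
          by (rule split) (use lt W0 dist in auto)
        moreover have "\<not> Q (\<lambda>i. (1/r) * B i 0 + (1/r) * B i c)"
          by (rule Qbad1) (use rnz z W0 s c1 bc d1 bd gr g_def in \<open>auto simp: field_simps\<close>)
        ultimately show False by blast
      next
        case d2: False
        hence bd: "B b d = 0" and ad: "B a d = g" using D by auto
        have ab: "B a b = 0" and rg: "r = g" using Ra' c1 ad rnz gnz by auto
        have "L a = - L b" using h2[of "L a" r "L b"] Bl0 rnz by (simp add: ac_simps)
        moreover have "L 0 = - L d" using h2[of "L 0" r "L d"] Bla ab c1 ad rg rnz by (simp add: ac_simps)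
        moreover have "L 0 = - L c" using h2[of "L 0" r "L c"] Blb ab bc bd rg rnz by (simp add: ac_simps)
        moreover have "L b = - L d" using h2[of "L b" g "L d"] Blc c1 bc g_def gnz by (simp add: ac_simps)
        moreover have "L a = - L c" using h2[of "L a" g "L c"] Bld ad bd g_def gnz by (simp add: ac_simps)
        ultimately show False using Lnz by auto
      qed
    next
      case c2: False
      hence bc: "B b c = 0" and ac: "B a c = g" using C by auto
      show False
      proof (cases "B a d = 0")
        case d1: True
        hence bd: "B b d = g" using D by auto
        have ab: "B a b = 0" and rg: "r = g" using Ra' ac d1 rnz gnz by auto
        have "L a = - L b" using h2[of "L a" r "L b"] Bl0 rnz by (simp add: ac_simps)
        moreover have "L 0 = - L c" using h2[of "L 0" r "L c"] Bla ab ac d1 rg rnz by (simp add: ac_simps)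
        moreover have "L 0 = - L d" using h2[of "L 0" r "L d"] Blb ab bc bd rg rnz by (simp add: ac_simps)
        moreover have "L a = - L d" using h2[of "L a" g "L d"] Blc ac bc g_def gnz by (simp add: ac_simps)
        moreover have "L b = - L c" using h2[of "L b" g "L c"] Bld d1 bd g_def gnz by (simp add: ac_simps)
        ultimately show False using Lnz by auto
      next
        case d2: False
        hence bd: "B b d = 0" and ad: "B a d = g" using D by auto
        have ab: "B a b = r" using Ra' ac ad by auto
        have e0: "L a = - L b" using h2[of "L a" r "L b"] Bl0 rnz by (simp add: ac_simps)
        have eb: "L 0 = - L a" using h2[of "L 0" r "L a"] Blb ab bc bd rnz by (simp add: ac_simps)
        have ec: "L d = - L a" using h2[of "L d" g "L a"] Blc ac bc g_def gnz by (simp add: ac_simps)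
        have ed: "L c = - L a" using h2[of "L c" g "L a"] Bld ad bd g_def gnz by (simp add: ac_simps)
        have X: "L 0 * r + L b * r + L c * g + L d * g = 0" using Bla ab ac ad by simp
        have "L a * (2 * r + 2 * g) = - (L 0 * r + L b * r + L c * g + L d * g)"
          by (simp add: e0 eb ec ed algebra_simps)
        hence "L a * (2 * r + 2 * g) = 0" using X by simp
        moreover have "L a \<noteq> 0" using Lnz e0 eb ec ed by auto
        ultimately have gr: "g = - r" by (rule h3)
        have "Q (\<lambda>i. (1/r) * B i 0 + (1/r) * B i c)"
          by (rule split) (use lt W0 dist in auto)
        moreover have "\<not> Q (\<lambda>i. (1/r) * B i 0 + (1/r) * B i c)"
          by (rule Qbad2) (use rnz z W0 s ac bc ad bd gr g_def in \<open>auto simp: field_simps\<close>)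
        ultimately show False by blast
      qed
    qed
  qed
qed



lemma cyc_sub:
  fixes B :: "nat \<Rightarrow> nat \<Rightarrow> complex" and i a b c d :: nat
  assumes dist: "distinct [i,a,b,c,d]" and lt: "i<5" "a<5" "b<5" "c<5" "d<5"
    and cover: "\<forall>x<5. x = i \<or> x = a \<or> x = b \<or> x = c \<or> x = d"
    and sym: "\<forall>x<5. \<forall>y<5. B x y = B y x"
    and diag: "\<forall>x<5. B x x = 0"
    and coli: "\<forall>x<5. B x i = 0"
    and Ra: "R3 (\<lambda>x. B x a) i b c d" and Rb: "R3 (\<lambda>x. B x b) i a c d" and Rc: "R3 (\<lambda>x. B x c) i a b d"
    and nz: "\<forall>k<5. k \<noteq> i \<longrightarrow> (\<exists>x<5. B x k \<noteq> 0)"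
    and coinc: "\<And>j k t \<mu> \<nu>. j<5 \<Longrightarrow> k<5 \<Longrightarrow> t<5 \<Longrightarrow> j\<noteq>k \<Longrightarrow> j\<noteq>t \<Longrightarrow> k\<noteq>t \<Longrightarrow>
        (\<forall>x<5. B x j = \<mu> * B x k) \<Longrightarrow> (\<forall>x<5. B x t = \<nu> * B x k) \<Longrightarrow> False"
    and ab: "B a b = 0"
  shows False
proof -
  have s: "B b a = B a b" "B c a = B a c" "B d a = B a d" "B c b = B b c" "B d b = B b d" "B d c = B c d"
    using lt by (simp_all add: sym[rule_format])
  have zi: "B i a = 0" "B i b = 0" "B i c = 0" "B i d = 0" "B a i = 0" "B b i = 0" "B c i = 0" "B d i = 0" "B i i = 0"
    using lt coli by (simp_all add: sym[rule_format])
  have z: "B a a = 0" "B b b = 0" "B c c = 0" "B d d = 0" using diag lt by simp_all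
  have nzk: "B a k \<noteq> 0 \<or> B b k \<noteq> 0 \<or> B c k \<noteq> 0 \<or> B d k \<noteq> 0" if kk: "k<5" "k \<noteq> i" for k
  proof -
    obtain x where "x<5" "B x k \<noteq> 0" using nz kk by blast
    moreover have "B i k = 0" using sym[rule_format, of i k] coli kk lt by simp
    ultimately show ?thesis using cover by auto
  qed
  have allI5: "\<forall>x<5. P x" if "P i" "P a" "P b" "P c" "P d" for P :: "nat \<Rightarrow> bool"
    using cover that by auto
  have na: "B a c \<noteq> 0 \<or> B a d \<noteq> 0" using nzk[of a] lt dist z s ab by auto
  have Ra': "(B a c = B a d) \<or> (B a c = 0 \<and> B a d = 0) \<or> (B a d = 0 \<and> B a c = 0)"
    using Ra zi s ab unfolding R3_def by auto
  have ac: "B a c = B a d" "B a c \<noteq> 0" using Ra' na by auto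
  have nb: "B b c \<noteq> 0 \<or> B b d \<noteq> 0" using nzk[of b] lt dist z s ab by auto
  have Rb': "(B b c = B b d) \<or> (B b c = 0 \<and> B b d = 0) \<or> (B b d = 0 \<and> B b c = 0)"
    using Rb zi s ab unfolding R3_def by auto
  have bc: "B b c = B b d" "B b c \<noteq> 0" using Rb' nb by auto
  have Rc': "(B a c = 0 \<and> B b c = B c d) \<or> (B b c = 0 \<and> B a c = B c d) \<or> (B c d = 0 \<and> B a c = B b c)"
    using Rc zi s unfolding R3_def by auto
  have e: "B a c = B b c" using Rc' ac bc by auto
  show False
  proof (rule coinc[of a b i 1 0])
    show "\<forall>x<5. B x a = 1 * B x b"
      by (rule allI5) (use zi z s ab ac bc e in auto)
    show "\<forall>x<5. B x i = 0 * B x b" using coli by simp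
  qed (use dist lt in auto)
qed

lemma cyc:
  fixes B :: "nat \<Rightarrow> nat \<Rightarrow> complex" and i a b c d :: nat
  assumes dist: "distinct [i,a,b,c,d]" and lt: "i<5" "a<5" "b<5" "c<5" "d<5"
    and cover: "\<forall>x<5. x = i \<or> x = a \<or> x = b \<or> x = c \<or> x = d"
    and sym: "\<forall>x<5. \<forall>y<5. B x y = B y x"
    and diag: "\<forall>x<5. B x x = 0"
    and coli: "\<forall>x<5. B x i = 0"
    and Ra: "R3 (\<lambda>x. B x a) i b c d" and Rb: "R3 (\<lambda>x. B x b) i a c d" and Rc: "R3 (\<lambda>x. B x c) i a b d"
    and Rd: "R3 (\<lambda>x. B x d) i a b c"
    and nz: "\<forall>k<5. k \<noteq> i \<longrightarrow> (\<exists>x<5. B x k \<noteq> 0)"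
    and coinc: "\<And>j k t \<mu> \<nu>. j<5 \<Longrightarrow> k<5 \<Longrightarrow> t<5 \<Longrightarrow> j\<noteq>k \<Longrightarrow> j\<noteq>t \<Longrightarrow> k\<noteq>t \<Longrightarrow>
        (\<forall>x<5. B x j = \<mu> * B x k) \<Longrightarrow> (\<forall>x<5. B x t = \<nu> * B x k) \<Longrightarrow> False"
  shows False
proof -
  have zi: "B i a = 0" using lt coli by (simp add: sym[rule_format])
  have zaa: "B a a = 0" using diag lt by simp
  obtain x where x: "x<5" "B x a \<noteq> 0" using nz lt dist by auto
  have nza: "B b a \<noteq> 0 \<or> B c a \<noteq> 0 \<or> B d a \<noteq> 0"
    using cover x zi zaa by auto
  have "B a b = 0 \<or> B a c = 0 \<or> B a d = 0"
    using Ra zi nza lt unfolding R3_def by (auto simp: sym[rule_format])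
  moreover have "B a b \<noteq> 0"
  proof
    assume h: "B a b = 0"
    show False by (rule cyc_sub[OF dist lt cover sym diag coli Ra Rb Rc nz coinc h])
  qed
  moreover have "B a c \<noteq> 0"
  proof
    assume h: "B a c = 0"
    have d': "distinct [i,a,c,b,d]" using dist by auto
    have c': "\<forall>x<5. x = i \<or> x = a \<or> x = c \<or> x = b \<or> x = d" using cover by blast
    have Ra': "R3 (\<lambda>x. B x a) i c b d" using Ra R3_sw2 by blast
    show False by (rule cyc_sub[OF d' lt(1,2,4,3,5) c' sym diag coli Ra' Rc Rb nz coinc h])
  qed
  moreover have "B a d \<noteq> 0"
  proof
    assume h: "B a d = 0"
    have d': "distinct [i,a,d,b,c]" using dist by auto
    have c': "\<forall>x<5. x = i \<or> x = a \<or> x = d \<or> x = b \<or> x = c" using cover by blast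
    have Ra': "R3 (\<lambda>x. B x a) i d b c" using Ra R3_sw2 R3_sw3 by metis
    have Rb': "R3 (\<lambda>x. B x b) i a d c" using Rb R3_sw3 by blast
    show False by (rule cyc_sub[OF d' lt(1,2,5,3,4) c' sym diag coli Ra' Rd Rb' nz coinc h])
  qed
  ultimately show False by blast
qed



lemma lt5: "(x::nat) < 5 \<longleftrightarrow> x = 0 \<or> x = 1 \<or> x = 2 \<or> x = 3 \<or> x = 4" by auto

lemma set5:
  assumes "distinct [i,a,b,c,d::nat]" "i<5" "a<5" "b<5" "c<5" "d<5"
  shows "{..<5} = {i,a,b,c,d}"
proof -
  have "{i,a,b,c,d} \<subseteq> {..<5::nat}" using assms by auto
  moreover have "card {i,a,b,c,d} = card {..<5::nat}" using assms by simp
  ultimately show ?thesis by (metis card_subset_eq finite_lessThan)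
qed

lemma cover5:
  assumes "distinct [i,a,b,c,d::nat]" "i<5" "a<5" "b<5" "c<5" "d<5"
  shows "\<forall>x<5. x = i \<or> x = a \<or> x = b \<or> x = c \<or> x = d"
  using set5[OF assms] by blast

lemma sum5:
  assumes "distinct [i,a,b,c,d::nat]" "i<5" "a<5" "b<5" "c<5" "d<5"
  shows "(\<Sum>j<5. f j) = f i + f a + f b + f c + f d"
  using set5[OF assms] assms(1) by (simp add: add.assoc)

lemma setm:
  assumes "distinct [i,a,b,c,d::nat]" "i<5" "a<5" "b<5" "c<5" "d<5"
  shows "{a,b,c,d} = {0..4} - {i}"
proof -
  have "{0..4::nat} = {..<5}" by auto
  thus ?thesis using set5[OF assms] assms(1) by auto
qed

lemma rat_Reals: "(of_rat q :: complex) \<in> \<real>"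
proof (cases q)
  case (Fract a b) thus ?thesis by (simp add: of_rat_rat)
qed

lemma quartic_real: "(\<forall>j<5. y j \<in> \<real>) \<Longrightarrow> quartic_form T y \<in> \<real>"
  unfolding quartic_form_def by (intro sum_in_Reals Reals_mult) (auto simp: rat_Reals)

lemma not_sq:
  assumes "G \<in> \<real>" shows "-3 * 256 \<noteq> (G::complex)^2"
proof
  assume h: "-3 * 256 = G^2"
  obtain g where "G = of_real g" using assms Reals_cases by blast
  hence "complex_of_real (-768) = of_real (g^2)" using h by simp
  hence "-768 = g^2" using of_real_eq_iff by blast
  moreover have "g^2 \<ge> 0" by simp
  ultimately show False by linarith
qed



theorem mainTheorem16:
  fixes l :: "nat \<Rightarrow> rat" and A :: "nat \<Rightarrow> nat \<Rightarrow> rat"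
  assumes "smooth_quadric_surface l A"
    and "splits_over l A"
    and "\<forall>i<5. \<exists>P. tangent_at l A i P"
    and "\<forall>i<5. \<forall>P. tangent_at l A i P \<longrightarrow> on_R_line i P"
  shows "\<forall>P. tangent_at l A 0 P \<longrightarrow> P 1 \<noteq> 0 \<and> P 2 \<noteq> 0 \<and> P 3 \<noteq> 0 \<and> P 4 \<noteq> 0"
proof (intro allI impI)
  fix P assume tP: "tangent_at l A 0 P"
  obtain j0 where j0: "j0<5" "l j0 \<noteq> 0" using assms(1) unfolding smooth_quadric_surface_def by blast
  have Asym: "\<forall>j<5. \<forall>k<5. A j k = A k j" using assms(1) unfolding smooth_quadric_surface_def by blast
  obtain T where T: "\<forall>x. on_surface l A x \<longrightarrow> -3 * Delta' x = (quartic_form T x)\<^sup>2"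
    using assms(2) unfolding splits_over_def by blast
  obtain Pt where Pt: "\<forall>i<5. tangent_at l A i (Pt i)" using assms(3) by metis
  define PP where "PP i = (if i = 0 then P else Pt i)" for i
  have tPP: "tangent_at l A i (PP i)" if "i<5" for i using Pt tP that unfolding PP_def by auto
  have onR: "on_R_line i (PP i)" if "i<5" for i using assms(4) tPP that by blast
  have linP: "lin_form l (PP i) = 0" if "i<5" for i
    using tPP[OF that] unfolding tangent_at_def on_surface_def by blast
  have bilP: "bil_form A (PP i) (PP i) = 0" if "i<5" for i
    using tPP[OF that] unfolding tangent_at_def on_surface_def by blast
  have projP: "proj_pt (PP i)" if "i<5" for i
    using tPP[OF that] unfolding tangent_at_def on_surface_def by blast
  have diagP: "PP i i = 0" if "i<5" for i using onR[OF that] unfolding on_R_line_def by blast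
  define ej where "ej y = (\<lambda>x. if x = y then 1 else 0 :: complex)" for y :: nat
  have lin_ej: "lin_form l (ej y) = of_rat (l y)" if "y<5" for y
    unfolding lin_form_def ej_def using that by (simp add: if_distrib cong: if_cong)
  have span: "\<exists>\<alpha> \<beta>. \<forall>v. v i = \<alpha> * lin_form l v + \<beta> * bil_form A (PP i) v" if "i<5" for i
  proof (rule span3[of "lin_form l" "bil_form A (PP i)" "\<lambda>v. v i" "ej j0"])
    show "lin_form l (ej j0) \<noteq> 0" using lin_ej j0 by simp
    fix v assume "lin_form l v = 0" "bil_form A (PP i) v = 0"
    thus "v i = 0" using tPP[OF that] unfolding tangent_at_def tangent_space_def by blast
  qed (simp_all add: lin_lin bil_lin2)
  have "\<forall>i. \<exists>p::complex\<times>complex. i<5 \<longrightarrow> (\<forall>v. v i = fst p * lin_form l v + snd p * bil_form A (PP i) v)"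
  proof
    fix i show "\<exists>p::complex\<times>complex. i<5 \<longrightarrow> (\<forall>v. v i = fst p * lin_form l v + snd p * bil_form A (PP i) v)"
    proof (cases "i<5")
      case True then obtain \<alpha> \<beta> where "\<forall>v. v i = \<alpha> * lin_form l v + \<beta> * bil_form A (PP i) v" using span by blast
      thus ?thesis by (intro exI[of _ "(\<alpha>,\<beta>)"]) simp
    qed simp
  qed
  then obtain pf where pf: "\<forall>i. i<5 \<longrightarrow> (\<forall>v. v i = fst (pf i) * lin_form l v + snd (pf i) * bil_form A (PP i) v)"
    by (metis choice)
  define al where "al i = fst (pf i)" for i
  define be where "be i = snd (pf i)" for i
  have ab: "v i = al i * lin_form l v + be i * bil_form A (PP i) v" if "i<5" for i v
    using pf that unfolding al_def be_def by blast
  have F2: "PP k j = be j * bil_form A (PP j) (PP k)" if "j<5" "k<5" for j k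
    using ab[OF that(1), of "PP k"] linP[OF that(2)] by simp
  define B where "B x k = be k * PP k x" for x k
  define L where "L j = (of_rat (l j) :: complex)" for j
  have Bc: "B x k = be x * be k * bil_form A (PP x) (PP k)" if "x<5" "k<5" for x k
    unfolding B_def using F2[OF that] by simp
  have symB: "\<forall>i<5. \<forall>j<5. B i j = B j i"
    using Bc bil_sym[OF Asym] by (simp add: mult.commute)
  have diagB: "\<forall>i<5. B i i = 0" unfolding B_def using diagP by simp
  have BlB: "(\<Sum>j<5. L j * B j k) = 0" if "k<5" for k
  proof -
    have "(\<Sum>j<5. L j * B j k) = be k * lin_form l (PP k)"
      unfolding L_def B_def lin_form_def by (simp add: sum_distrib_left algebra_simps)
    thus ?thesis using linP[OF that] by simp
  qed
  have LnzB: "L j0 \<noteq> 0" unfolding L_def using j0 by simp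
  have R3col: "R3 (\<lambda>x. B x k) a b c d" if "k<5" "distinct [a,b,c,d]" "{a,b,c,d} = {0..4} - {k}" for k a b c d
    unfolding B_def by (rule R3_scale, rule on_R_line_R3[OF onR[OF that(1)] that(2,3)])
  have colfun: "v t = al t * lin_form l v + bil_form A (\<lambda>x. B x t) v" if "t<5" for t v
    unfolding B_def bil_scale1 using ab[OF that] by simp
  have coincB: False if h: "j<5" "k<5" "t<5" "j\<noteq>k" "j\<noteq>t" "k\<noteq>t"
    "\<forall>x<5. B x j = \<mu> * B x k" "\<forall>x<5. B x t = \<nu> * B x k" for j k t \<mu> \<nu>
  proof -
    define g where "g = bil_form A (\<lambda>x. B x k)"
    have cj: "bil_form A (\<lambda>x. B x j) v = \<mu> * g v" for v
      unfolding g_def using bil_cong1[of "\<lambda>x. B x j" "\<lambda>x. \<mu> * B x k" A v] h(7) by (simp add: bil_scale1)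
    have ct: "bil_form A (\<lambda>x. B x t) v = \<nu> * g v" for v
      unfolding g_def using bil_cong1[of "\<lambda>x. B x t" "\<lambda>x. \<nu> * B x k" A v] h(8) by (simp add: bil_scale1)
    have ej: "j<5 \<Longrightarrow> v j = al j * lin_form l v + \<mu> * g v"
      "v k = al k * lin_form l v + 1 * g v"
      "v t = al t * lin_form l v + \<nu> * g v" for v
      using colfun[OF h(1), of v] colfun[OF h(2), of v] colfun[OF h(3), of v] cj ct unfolding g_def by auto
    show False
      apply (rule three_false[of "al j" "lin_form l (ej j)" \<mu> "g (ej j)" "lin_form l (ej k)" "g (ej k)"
            "lin_form l (ej t)" "g (ej t)" "al k" 1 "al t" \<nu>])
      using ej(1)[OF h(1), of "ej j"] ej(1)[OF h(1), of "ej k"] ej(1)[OF h(1), of "ej t"]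
        ej(2)[of "ej j"] ej(2)[of "ej k"] ej(2)[of "ej t"]
        ej(3)[of "ej j"] ej(3)[of "ej k"] ej(3)[of "ej t"] h
      unfolding ej_def by auto
  qed
  define Q where "Q y = (proj_pt y \<longrightarrow> -3 * Delta' y = (quartic_form T y)\<^sup>2)" for y
  have splitB: "Q (\<lambda>x. u * B x j + v * B x k)" if h: "j<5" "k<5" "j \<noteq> k" "B j k = 0" for j k u v
  proof -
    define y where "y = (\<lambda>x. u * B x j + v * B x k)"
    have y': "y = (\<lambda>x. (u * be j) * PP j x + (v * be k) * PP k x)"
      unfolding y_def B_def by (simp add: algebra_simps)
    have "lin_form l y = 0" unfolding y' lin_lin using linP h by simp
    moreover have "bil_form A y y = 0"
    proof -
      have s: "bil_form A (PP k) (PP j) = bil_form A (PP j) (PP k)" using bil_sym[OF Asym] by simp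
      have z: "be j * be k * bil_form A (PP j) (PP k) = 0" using h(4) Bc[OF h(1,2)] by simp
      have "bil_form A y y = (u*be j)*(u*be j) * bil_form A (PP j) (PP j) + (u*be j)*(v*be k) * bil_form A (PP j) (PP k)
         + (v*be k)*(u*be j) * bil_form A (PP k) (PP j) + (v*be k)*(v*be k) * bil_form A (PP k) (PP k)"
        unfolding y' bil_lin1 bil_lin2 by (simp add: algebra_simps)
      also have "\<dots> = 2 * u * v * (be j * be k * bil_form A (PP j) (PP k))"
        using bilP h s by (simp add: algebra_simps)
      finally show ?thesis using z by simp
    qed
    ultimately show ?thesis unfolding Q_def y_def[symmetric] using T unfolding on_surface_def by blast
  qed
  have QbadGen: "\<not> Q y" if "\<forall>x<5. y x \<in> \<real>" "Delta' y = 256" "proj_pt y" for y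
    unfolding Q_def using not_sq[OF quartic_real[OF that(1)], of T] that(2,3) by simp
  show "P 1 \<noteq> 0 \<and> P 2 \<noteq> 0 \<and> P 3 \<noteq> 0 \<and> P 4 \<noteq> 0"
  proof (rule ccontr)
    assume neg: "\<not> (P 1 \<noteq> 0 \<and> P 2 \<noteq> 0 \<and> P 3 \<noteq> 0 \<and> P 4 \<noteq> 0)"
    show False
    proof (cases "\<exists>i<5. be i = 0")
      case True
      then obtain i where i: "i<5" "be i = 0" by blast
      have vi: "v i = al i * lin_form l v" for v using ab[OF i(1), of v] i(2) by simp
      have ali: "al i \<noteq> 0" using vi[of "ej i"] unfolding ej_def by auto
      have bez: "be k \<noteq> 0" if "k<5" "k \<noteq> i" for k
      proof
        assume bk: "be k = 0"
        have "0 = al i * of_rat (l k)" using vi[of "ej k"] lin_ej[OF that(1)] that(2) unfolding ej_def by simp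
        hence lk: "(of_rat (l k) :: complex) = 0" using ali by simp
        have "1 = al k * of_rat (l k)" using ab[OF that(1), of "ej k"] bk lin_ej[OF that(1)] unfolding ej_def by simp
        thus False using lk by simp
      qed
      have nz: "\<forall>k<5. k \<noteq> i \<longrightarrow> (\<exists>x<5. B x k \<noteq> 0)"
      proof (intro allI impI)
        fix k assume k: "k<5" "k \<noteq> i"
        obtain x where "x<5" "PP k x \<noteq> 0" using projP[OF k(1)] unfolding proj_pt_def by blast
        thus "\<exists>x<5. B x k \<noteq> 0" using bez[OF k] unfolding B_def by auto
      qed
      have coli: "\<forall>x<5. B x i = 0" unfolding B_def using i by simp
      have cyc_app: False if d: "distinct [i,a,b,c,d]" "a<5" "b<5" "c<5" "d<5" for a b c d
      proof (rule cyc[of i a b c d B])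
        show "\<forall>x<5. x = i \<or> x = a \<or> x = b \<or> x = c \<or> x = d" by (rule cover5) (use d i in auto)
        show "R3 (\<lambda>x. B x a) i b c d" by (rule R3col) (use d i setm[of a i b c d] in auto)
        show "R3 (\<lambda>x. B x b) i a c d" by (rule R3col) (use d i setm[of b i a c d] in auto)
        show "R3 (\<lambda>x. B x c) i a b d" by (rule R3col) (use d i setm[of c i a b d] in auto)
        show "R3 (\<lambda>x. B x d) i a b c" by (rule R3col) (use d i setm[of d i a b c] in auto)
      qed (use d i symB diagB coli nz coincB in auto)
      have "i = 0 \<or> i = 1 \<or> i = 2 \<or> i = 3 \<or> i = 4" using i(1) lt5 by blast
      thus False
      proof (elim disjE)
        assume "i = 0" thus False using cyc_app[of 1 2 3 4] by simp
      next
        assume "i = 1" thus False using cyc_app[of 0 2 3 4] by simp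
      next
        assume "i = 2" thus False using cyc_app[of 0 1 3 4] by simp
      next
        assume "i = 3" thus False using cyc_app[of 0 1 2 4] by simp
      next
        assume "i = 4" thus False using cyc_app[of 0 1 2 3] by simp
      qed
    next
      case False
      have nzB: "\<forall>k<5. \<exists>x<5. B x k \<noteq> 0"
      proof (intro allI impI)
        fix k :: nat assume k: "k<5"
        obtain x where "x<5" "PP k x \<noteq> 0" using projP[OF k] unfolding proj_pt_def by blast
        thus "\<exists>x<5. B x k \<noteq> 0" using False k unfolding B_def by auto
      qed
      have core_app: False if d: "distinct [0,a,b,c,d]" "a<5" "b<5" "c<5" "d<5"
        and W: "B 0 a = B 0 b" "B 0 c = 0" "B 0 d = 0"
        and D1: "\<And>y. y 0 = 0 \<Longrightarrow> y a = 1 \<Longrightarrow> y b = 0 \<Longrightarrow> y c = 0 \<Longrightarrow> y d = -1 \<Longrightarrow> Delta' y = 256"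
        and D2: "\<And>y. y 0 = 0 \<Longrightarrow> y a = 0 \<Longrightarrow> y b = 1 \<Longrightarrow> y c = 0 \<Longrightarrow> y d = -1 \<Longrightarrow> Delta' y = 256"
        for a b c d
      proof -
        have l0: "(0::nat) < 5" by simp
        have cov: "\<forall>x<5. x = 0 \<or> x = a \<or> x = b \<or> x = c \<or> x = d" by (rule cover5) (use d in auto)
        show False
        proof (rule core[of a b c d B L Q])
          show "R3 (\<lambda>x. B x 0) a b c d" by (rule R3col) (use d setm[of 0 a b c d] in auto)
          show "R3 (\<lambda>x. B x a) 0 b c d" by (rule R3col) (use d setm[of a 0 b c d] in auto)
          show "R3 (\<lambda>x. B x b) 0 a c d" by (rule R3col) (use d setm[of b 0 a c d] in auto)
          show "R3 (\<lambda>x. B x c) 0 a b d" by (rule R3col) (use d setm[of c 0 a b d] in auto)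
          show "R3 (\<lambda>x. B x d) 0 a b c" by (rule R3col) (use d setm[of d 0 a b c] in auto)
          show "L 0 * B 0 k + L a * B a k + L b * B b k + L c * B c k + L d * B d k = 0" if "k<5" for k
            using BlB[OF that] sum5[OF d(1) l0 d(2-5), of "\<lambda>j. L j * B j k"] by simp
          show "L 0 \<noteq> 0 \<or> L a \<noteq> 0 \<or> L b \<noteq> 0 \<or> L c \<noteq> 0 \<or> L d \<noteq> 0"
            using cov j0(1) LnzB by metis
          show "\<not> Q y" if y: "y 0 = 0" "y a = 1" "y b = 0" "y c = 0" "y d = -1" for y
          proof (rule QbadGen)
            show "\<forall>x<5. y x \<in> \<real>" using cov y by auto
            show "Delta' y = 256" by (rule D1[OF y])
            show "proj_pt y" unfolding proj_pt_def using y d by auto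
          qed
          show "\<not> Q y" if y: "y 0 = 0" "y a = 0" "y b = 1" "y c = 0" "y d = -1" for y
          proof (rule QbadGen)
            show "\<forall>x<5. y x \<in> \<real>" using cov y by auto
            show "Delta' y = 256" by (rule D2[OF y])
            show "proj_pt y" unfolding proj_pt_def using y d by auto
          qed
        qed (use d W cov symB diagB nzB coincB splitB in auto)
      qed
      have B0: "B 0 x = be 0 * P x" if "x<5" for x
        using symB that unfolding B_def PP_def by auto
      have st: "{1,2,3,4::nat} = {0..4} - {0}" using setm[of 0 1 2 3 4] by simp
      have R0: "R3 P 1 2 3 4"
        using on_R_line_R3[OF onR[of 0] _ st] unfolding PP_def by simp
      have ng: "P 1 = 0 \<or> P 2 = 0 \<or> P 3 = 0 \<or> P 4 = 0" using neg by blast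
      have c1: "P 1 = 0 \<Longrightarrow> P 2 = 0 \<Longrightarrow> P 3 = P 4 \<Longrightarrow> False"
      proof -
        assume h: "P 1 = 0" "P 2 = 0" "P 3 = P 4"
        show False
        proof (rule core_app[of 3 4 1 2])
          show "B 0 3 = B 0 4" "B 0 1 = 0" "B 0 2 = 0" using h B0 by simp_all
          show "Delta' y = 256" if "y 0 = 0" "y 3 = 1" "y 4 = 0" "y 1 = 0" "y 2 = -1" for y
            using that unfolding Delta'_def by (simp add: power2_eq_square algebra_simps)
          show "Delta' y = 256" if "y 0 = 0" "y 3 = 0" "y 4 = 1" "y 1 = 0" "y 2 = -1" for y
            using that unfolding Delta'_def by (simp add: power2_eq_square algebra_simps)
        qed simp_all
      qed
      have c2: "P 3 = 0 \<Longrightarrow> P 4 = 0 \<Longrightarrow> P 1 = P 2 \<Longrightarrow> False"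
      proof -
        assume h: "P 3 = 0" "P 4 = 0" "P 1 = P 2"
        show False
        proof (rule core_app[of 1 2 3 4])
          show "B 0 1 = B 0 2" "B 0 3 = 0" "B 0 4 = 0" using h B0 by simp_all
          show "Delta' y = 256" if "y 0 = 0" "y 1 = 1" "y 2 = 0" "y 3 = 0" "y 4 = -1" for y
            using that unfolding Delta'_def by (simp add: power2_eq_square algebra_simps)
          show "Delta' y = 256" if "y 0 = 0" "y 1 = 0" "y 2 = 1" "y 3 = 0" "y 4 = -1" for y
            using that unfolding Delta'_def by (simp add: power2_eq_square algebra_simps)
        qed simp_all
      qed
      have c3: "P 1 = 0 \<Longrightarrow> P 3 = 0 \<Longrightarrow> P 2 = P 4 \<Longrightarrow> False"
      proof -
        assume h: "P 1 = 0" "P 3 = 0" "P 2 = P 4"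
        show False
        proof (rule core_app[of 2 4 1 3])
          show "B 0 2 = B 0 4" "B 0 1 = 0" "B 0 3 = 0" using h B0 by simp_all
          show "Delta' y = 256" if "y 0 = 0" "y 2 = 1" "y 4 = 0" "y 1 = 0" "y 3 = -1" for y
            using that unfolding Delta'_def by (simp add: power2_eq_square algebra_simps)
          show "Delta' y = 256" if "y 0 = 0" "y 2 = 0" "y 4 = 1" "y 1 = 0" "y 3 = -1" for y
            using that unfolding Delta'_def by (simp add: power2_eq_square algebra_simps)
        qed simp_all
      qed
      have c4: "P 2 = 0 \<Longrightarrow> P 4 = 0 \<Longrightarrow> P 1 = P 3 \<Longrightarrow> False"
      proof -
        assume h: "P 2 = 0" "P 4 = 0" "P 1 = P 3"
        show False
        proof (rule core_app[of 1 3 2 4])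
          show "B 0 1 = B 0 3" "B 0 2 = 0" "B 0 4 = 0" using h B0 by simp_all
          show "Delta' y = 256" if "y 0 = 0" "y 1 = 1" "y 3 = 0" "y 2 = 0" "y 4 = -1" for y
            using that unfolding Delta'_def by (simp add: power2_eq_square algebra_simps)
          show "Delta' y = 256" if "y 0 = 0" "y 1 = 0" "y 3 = 1" "y 2 = 0" "y 4 = -1" for y
            using that unfolding Delta'_def by (simp add: power2_eq_square algebra_simps)
        qed simp_all
      qed
      have c5: "P 1 = 0 \<Longrightarrow> P 4 = 0 \<Longrightarrow> P 2 = P 3 \<Longrightarrow> False"
      proof -
        assume h: "P 1 = 0" "P 4 = 0" "P 2 = P 3"
        show False
        proof (rule core_app[of 2 3 1 4])
          show "B 0 2 = B 0 3" "B 0 1 = 0" "B 0 4 = 0" using h B0 by simp_all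
          show "Delta' y = 256" if "y 0 = 0" "y 2 = 1" "y 3 = 0" "y 1 = 0" "y 4 = -1" for y
            using that unfolding Delta'_def by (simp add: power2_eq_square algebra_simps)
          show "Delta' y = 256" if "y 0 = 0" "y 2 = 0" "y 3 = 1" "y 1 = 0" "y 4 = -1" for y
            using that unfolding Delta'_def by (simp add: power2_eq_square algebra_simps)
        qed simp_all
      qed
      have c6: "P 2 = 0 \<Longrightarrow> P 3 = 0 \<Longrightarrow> P 1 = P 4 \<Longrightarrow> False"
      proof -
        assume h: "P 2 = 0" "P 3 = 0" "P 1 = P 4"
        show False
        proof (rule core_app[of 1 4 2 3])
          show "B 0 1 = B 0 4" "B 0 2 = 0" "B 0 3 = 0" using h B0 by simp_all
          show "Delta' y = 256" if "y 0 = 0" "y 1 = 1" "y 4 = 0" "y 2 = 0" "y 3 = -1" for y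
            using that unfolding Delta'_def by (simp add: power2_eq_square algebra_simps)
          show "Delta' y = 256" if "y 0 = 0" "y 1 = 0" "y 4 = 1" "y 2 = 0" "y 3 = -1" for y
            using that unfolding Delta'_def by (simp add: power2_eq_square algebra_simps)
        qed simp_all
      qed
      have R0': "(P 1 = P 2 \<and> P 3 = P 4) \<or> (P 1 = P 3 \<and> P 2 = P 4) \<or> (P 1 = P 4 \<and> P 2 = P 3)"
        using R0 unfolding R3_def .
      show False using c1 c2 c3 c4 c5 c6 R0' ng by auto
    qed
  qed
qed


end
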